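(* Let $U$ be a set with a total order $\preceq$, let $k>1$, and let $\mathcal P$ be a $k$-pattern in $U$ that admits at most one reconstruction from $\preceq$-consecutive points. If $n$ is a positive integer and $r$ is the remainder when $n$ is divided by $k-1$, then \[ S_{\mathcal P}(n)\le \frac{(n-r)(n+r-k+1)}{2k-2}. \]
   Context: A pattern in $U$ is a collection $\mathcal P$ of finite subsets of $U$ (its instances; in the paper, an equivalence class of subsets under some equivalence relation); it is a $k$-pattern if every instance has exactly $k$ elements. For finite $V\subseteq U$, $S_{\mathcal P}(V)=|\{P\subseteq V: P\in\mathcal P\}|$, and $S_{\mathcal P}(n)=\max\{S_{\mathcal P}(V):V\subseteq U,\ |V|=n\}$. The $i$th point of a finite set with respect to $\preceq$ is the element having exactly $i-1$ elements of the set $\preceq$-below it. Given $j\in\{1,\dots,k-1\}$ and $u\prec v$ in $U$, a reconstruction of $\mathcal P$ with $u,v$ as $j$th and $(j+1)$th points is an instance $P\in\mathcal P$ whose $j$th and $(j+1)$th points are $u$ and $v$ respectively. $\mathcal P$ admits at most one reconstruction from $\preceq$-consecutive points if for every $j\in\{1,\dots,k-1\}$ and every $u\prec v$ in $U$ there is at most one such reconstruction. *)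

theory Defs
  imports Complex_Main
begin

text \<open>The total order on U is the order of the linorder type, restricted to U.\<close>

definition is_k_pattern :: "'a set \<Rightarrow> nat \<Rightarrow> 'a set set \<Rightarrow> bool" where
  "is_k_pattern U k P \<longleftrightarrow> (\<forall>A\<in>P. A \<subseteq> U \<and> finite A \<and> card A = k)"

definition ith_point :: "'a::linorder set \<Rightarrow> nat \<Rightarrow> 'a \<Rightarrow> bool" where
  "ith_point A i x \<longleftrightarrow> x \<in> A \<and> card {y\<in>A. y < x} = i - 1"

definition is_reconstruction :: "'a::linorder set set \<Rightarrow> nat \<Rightarrow> 'a \<Rightarrow> 'a \<Rightarrow> 'a set \<Rightarrow> bool" where
  "is_reconstruction P j u v A \<longleftrightarrow> A \<in> P \<and> ith_point A j u \<and> ith_point A (j + 1) v"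

definition at_most_one_reconstruction ::
  "'a::linorder set \<Rightarrow> nat \<Rightarrow> 'a set set \<Rightarrow> bool" where
  "at_most_one_reconstruction U k P \<longleftrightarrow>
     (\<forall>j\<in>{1..k-1}. \<forall>u\<in>U. \<forall>v\<in>U. u < v \<longrightarrow>
        (\<forall>A B. is_reconstruction P j u v A \<and> is_reconstruction P j u v B \<longrightarrow> A = B))"

definition S_set :: "'a set set \<Rightarrow> 'a set \<Rightarrow> nat" where
  "S_set P V = card {A\<in>P. A \<subseteq> V}"

end

theory Submission
  imports Defs
begin

lemma ith_mono:
  assumes "finite A" "ith_point A i x" "ith_point A i' y" "1 \<le> i" "i < i'"
  shows "x < y"
proof (rule ccontr)
  assume "\<not> x < y"
  then have "y \<le> x" by simp
  then have "{z\<in>A. z<y} \<subseteq> {z\<in>A. z<x}" by auto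
  then have "card {z\<in>A. z<y} \<le> card {z\<in>A. z<x}" using assms(1) by (intro card_mono) auto
  then show False using assms unfolding ith_point_def by simp
qed

lemma rank_strict:
  fixes V :: "'a::linorder set"
  assumes "finite V" "x \<in> V" "y \<in> V" "x < y"
  shows "card {z\<in>V. z<x} < card {z\<in>V. z<y}"
proof (rule psubset_card_mono)
  show "finite {z\<in>V. z<y}" using assms by simp
  show "{z\<in>V. z<x} \<subset> {z\<in>V. z<y}" using assms by auto
qed

lemma ith_exists:
  fixes A :: "'a::linorder set"
  assumes "finite A" "1 \<le> i" "i \<le> card A"
  shows "\<exists>x. ith_point A i x"
proof -
  define f where "f x = card {z\<in>A. z<x}" for x
  have inj: "inj_on f A"
  proof (rule inj_onI)
    fix x y assume "x \<in> A" "y \<in> A" "f x = f y"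
    then show "x = y" using rank_strict[OF assms(1), of x y] rank_strict[OF assms(1), of y x]
      unfolding f_def by (metis less_irrefl linorder_neqE)
  qed
  have sub: "f ` A \<subseteq> {0..<card A}"
  proof
    fix t assume "t \<in> f ` A"
    then obtain x where x: "x \<in> A" "t = f x" by auto
    have "{z\<in>A. z<x} \<subset> A" using x by auto
    then have "f x < card A" unfolding f_def using assms(1) by (intro psubset_card_mono) auto
    then show "t \<in> {0..<card A}" using x by simp
  qed
  have "card (f ` A) = card A" using inj by (simp add: card_image)
  then have "f ` A = {0..<card A}" using sub by (intro card_subset_eq) auto
  then have "i - 1 \<in> f ` A" using assms by auto
  then obtain x where "x \<in> A" "f x = i - 1" by auto
  then show ?thesis unfolding ith_point_def f_def by auto
qed

lemma find_switch:
  fixes P :: "nat \<Rightarrow> bool"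
  shows "1 \<le> k \<Longrightarrow> P 1 \<Longrightarrow> \<not> P k \<Longrightarrow> \<exists>j. 1 \<le> j \<and> j < k \<and> P j \<and> \<not> P (j+1)"
proof (induction k)
  case 0 then show ?case by simp
next
  case (Suc k)
  show ?case
  proof (cases "P k")
    case True
    then show ?thesis using Suc.prems by (intro exI[of _ k]) (auto simp: le_Suc_eq)
  next
    case False
    have "k \<noteq> 0" using Suc.prems False by (cases k) auto
    moreover have "k \<noteq> 1" using Suc.prems False by auto
    ultimately show ?thesis using Suc.IH[OF _ Suc.prems(2) False] by force
  qed
qed

lemma two_choose: "real (x choose 2) = real x * (real x - 1) / 2"
proof -
  have "even (x * (x - 1))" by (cases "even x") auto
  then have "2 * (x choose 2) = x * (x - 1)" by (simp add: choose_two)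
  then have "2 * real (x choose 2) = real x * real (x - 1)" by (metis of_nat_mult of_nat_numeral)
  then show ?thesis by (cases x) auto
qed


theorem mainTheorem3:
  fixes U :: "'a::linorder set" and P :: "'a set set" and k n r :: nat
  assumes "k > 1"
    and "is_k_pattern U k P"
    and "at_most_one_reconstruction U k P"
    and "n > 0"
    and "r = n mod (k - 1)"
  shows "\<forall>V. V \<subseteq> U \<and> finite V \<and> card V = n \<longrightarrow>
           real (S_set P V) \<le> (real n - real r) * (real n + real r - real k + 1) / (2 * real k - 2)"
proof (intro allI impI)
  fix V assume HV: "V \<subseteq> U \<and> finite V \<and> card V = n"
  then have VU: "V \<subseteq> U" and fV: "finite V" and cV: "card V = n" by auto
  define m where "m = k - 1"
  have m0: "m > 0" using assms(1) unfolding m_def by simp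
  have km: "k = m + 1" using assms(1) unfolding m_def by simp
  define q where "q = n div m"
  have rm: "r = n mod m" using assms(5) unfolding m_def by simp
  have rlt: "r < m" using rm m0 by simp
  have nqr: "n = m * q + r" unfolding q_def rm by simp
  define c where "c j = j * q + min j r" for j
  have cm: "c m = n" unfolding c_def using nqr rlt by simp
  have c0: "c 0 = 0" unfolding c_def by simp
  define rk where "rk x = card {z\<in>V. z<x}" for x
  have rk_strict: "rk x < rk y" if "x \<in> V" "y \<in> V" "x < y" for x y
    unfolding rk_def using rank_strict[OF fV that] .
  have rk_lt: "rk x < n" if "x \<in> V" for x
  proof -
    have "{z\<in>V. z<x} \<subset> V" using that by auto
    then show ?thesis unfolding rk_def cV[symmetric] using fV by (intro psubset_card_mono) auto
  qed
  define W where "W j = {x\<in>V. c (j-1) \<le> rk x \<and> rk x < c j}" for j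
  define F where "F = {A\<in>P. A \<subseteq> V}"
  define T where "T = Sigma {1..m} (\<lambda>j. {B. B \<subseteq> W j \<and> card B = 2})"
  define R where "R (A::'a set) (p::nat \<times> 'a set) \<longleftrightarrow> (\<exists>u v. snd p = {u,v} \<and> u < v \<and> ith_point A (fst p) u \<and> ith_point A (fst p + 1) v)" for A p
  have fW: "finite (W j)" for j unfolding W_def using fV by simp
  have fT: "finite T" unfolding T_def using fW by (intro finite_SigmaI) auto
  have "card F \<le> card T"
  proof (rule card_le_if_inj_on_rel[of T F R])
    show "finite T" by (rule fT)
  next
    fix A assume "A \<in> F"
    then have AP: "A \<in> P" and AV: "A \<subseteq> V" unfolding F_def by auto
    have fA: "finite A" and cA: "card A = k" using assms(2) AP unfolding is_k_pattern_def by auto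
    have "\<forall>i. \<exists>x. 1 \<le> i \<and> i \<le> k \<longrightarrow> ith_point A i x" using ith_exists[OF fA] cA by blast
    then obtain a where a: "\<And>i. 1 \<le> i \<Longrightarrow> i \<le> k \<Longrightarrow> ith_point A i (a i)" by metis
    have aV: "a i \<in> V" if "1 \<le> i" "i \<le> k" for i using a[OF that] AV unfolding ith_point_def by auto
    have "\<exists>j. 1 \<le> j \<and> j < k \<and> c (j-1) \<le> rk (a j) \<and> \<not> c (j+1-1) \<le> rk (a (j+1))"
    proof (rule find_switch[where P = "\<lambda>i. c (i-1) \<le> rk (a i)"])
      show "1 \<le> k" using assms(1) by simp
      show "c (1-1) \<le> rk (a 1)" using c0 by simp
      show "\<not> c (k-1) \<le> rk (a k)" using cm rk_lt[OF aV[of k]] assms(1) unfolding m_def by simp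
    qed
    then obtain j where j: "1 \<le> j" "j < k" "c (j-1) \<le> rk (a j)" "rk (a (j+1)) < c j" by auto
    have lt: "a j < a (j+1)" using ith_mono[OF fA a[of j] a[of "j+1"]] j by simp
    have rlt2: "rk (a j) < rk (a (j+1))" using rk_strict[OF aV aV lt] j by simp
    have B: "{a j, a (j+1)} \<subseteq> W j" unfolding W_def using j rlt2 aV[of j] aV[of "j+1"] by auto
    have cB: "card {a j, a (j+1)} = 2" using lt by simp
    show "\<exists>b. b \<in> T \<and> R A b"
    proof (rule exI[of _ "(j, {a j, a (j+1)})"], rule conjI)
      show "(j, {a j, a (j+1)}) \<in> T" using B cB j unfolding T_def m_def by auto
      show "R A (j, {a j, a (j+1)})" unfolding R_def using lt a[of j] a[of "j+1"] j by auto
    qed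
  next
    fix A1 A2 b assume H: "A1 \<in> F" "A2 \<in> F" "b \<in> T" "R A1 b" "R A2 b"
    obtain j B where b: "b = (j, B)" by (cases b)
    have j: "j \<in> {1..k-1}" using H(3) unfolding b T_def m_def by auto
    obtain u v where uv: "B = {u,v}" "u < v" "ith_point A1 j u" "ith_point A1 (j+1) v"
      using H(4) unfolding R_def b by auto
    obtain u' v' where uv': "B = {u',v'}" "u' < v'" "ith_point A2 j u'" "ith_point A2 (j+1) v'"
      using H(5) unfolding R_def b by auto
    have e: "u' = u" "v' = v" using uv uv' by (auto simp: doubleton_eq_iff)
    have "u \<in> U" "v \<in> U" using uv H(1) VU unfolding F_def ith_point_def by auto
    have r1: "is_reconstruction P j u v A1" using uv H(1) unfolding is_reconstruction_def F_def by auto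
    have r2: "is_reconstruction P j u v A2" using uv' e H(2) unfolding is_reconstruction_def F_def by auto
    show "A1 = A2"
      using assms(3)[unfolded at_most_one_reconstruction_def, rule_format, OF j \<open>u \<in> U\<close> \<open>v \<in> U\<close> uv(2)] r1 r2
      by blast
  qed
  also have "card T = (\<Sum>j\<in>{1..m}. card (W j) choose 2)"
    unfolding T_def using fW by (simp add: card_SigmaI n_subsets)
  also have "\<dots> \<le> (\<Sum>j\<in>{1..m}. (q + (if j \<le> r then 1 else 0)) choose 2)"
  proof (rule sum_mono)
    fix j assume j: "j \<in> {1..m}"
    have "card (W j) = card (rk ` W j)"
    proof (rule card_image[symmetric], rule inj_onI)
      fix x y assume "x \<in> W j" "y \<in> W j" "rk x = rk y"
      then have "x \<in> V" "y \<in> V" "rk x = rk y" unfolding W_def by auto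
      then show "x = y" using rk_strict by (metis less_irrefl linorder_neqE)
    qed
    also have "\<dots> \<le> card {c (j-1)..<c j}" unfolding W_def by (intro card_mono) auto
    also have "\<dots> = q + (if j \<le> r then 1 else 0)" using j unfolding c_def by (cases j) auto
    finally show "card (W j) choose 2 \<le> (q + (if j \<le> r then 1 else 0)) choose 2" by (rule binomial_right_mono)
  qed
  also have "\<dots> = r * ((q+1) choose 2) + (m - r) * (q choose 2)"
  proof -
    have "{1..m} = {1..r} \<union> {r+1..m}" using rlt by auto
    then have "(\<Sum>j\<in>{1..m}. (q + (if j \<le> r then 1 else 0)) choose 2)
       = (\<Sum>j\<in>{1..r}. (q + (if j \<le> r then 1 else 0)) choose 2) + (\<Sum>j\<in>{r+1..m}. (q + (if j \<le> r then 1 else 0)) choose 2)"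
      by (simp add: sum.union_disjoint ivl_disj_int)
    also have "\<dots> = (\<Sum>j\<in>{1..r}. (q+1) choose 2) + (\<Sum>j\<in>{r+1..m}. q choose 2)"
      by (intro arg_cong2[where f = "(+)"] sum.cong) auto
    finally show ?thesis by simp
  qed
  finally have le: "S_set P V \<le> r * ((q+1) choose 2) + (m - r) * (q choose 2)"
    unfolding S_set_def F_def .
  have "real (r * ((q+1) choose 2) + (m - r) * (q choose 2))
      = (real n - real r) * (real n + real r - real k + 1) / (2 * real k - 2)"
  proof -
    have e1: "real (m - r) = real m - real r" using rlt by simp
    have e2: "real (q+1) - 1 = real q" by simp
    have "real (r * ((q+1) choose 2) + (m - r) * (q choose 2))
        = real r * ((real q + 1) * real q / 2) + (real m - real r) * (real q * (real q - 1) / 2)"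
      unfolding of_nat_add of_nat_mult two_choose e1 by simp
    also have "\<dots> = real q * (real m * real q + 2 * real r - real m) / 2"
      by (simp add: divide_simps) (simp add: algebra_simps)
    also have "\<dots> = (real m * real q) * (real m * real q + 2 * real r - real m) / (2 * real m)"
      using m0 by (simp add: field_simps)
    also have "\<dots> = (real n - real r) * (real n + real r - real k + 1) / (2 * real k - 2)"
      unfolding nqr km by (simp add: algebra_simps)
    finally show ?thesis .
  qed
  then show "real (S_set P V) \<le> (real n - real r) * (real n + real r - real k + 1) / (2 * real k - 2)"
    using le by (metis of_nat_le_iff)
qed

end
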